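(* Let $U\subseteq U'\subset\mathbb Z^2$ be two upward closed sets of grid points, i.e., $(x,y)\in U\Rightarrow(x,y+1)\in U$, and likewise for $U'$. Let $f$ denote one peeling step. Then $f(U)\subseteq f(U')$.
   Context: One peeling step applied to a set $U$ of points is $f(U)=U\setminus\{\text{vertices (extreme points) of }\mathrm{conv}(U)\}$. *)

theory Defs
  imports "HOL-Analysis.Analysis"
begin

definition grid_emb :: "int \<times> int \<Rightarrow> real \<times> real" where
  "grid_emb p = (real_of_int (fst p), real_of_int (snd p))"

definition upward_closed :: "(int \<times> int) set \<Rightarrow> bool" where
  "upward_closed U \<longleftrightarrow> (\<forall>x y. (x, y) \<in> U \<longrightarrow> (x, y + 1) \<in> U)"

definition peel :: "(int \<times> int) set \<Rightarrow> (int \<times> int) set" where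
  "peel U = {p \<in> U. \<not> (grid_emb p extreme_point_of (convex hull (grid_emb ` U)))}"

end

theory Submission
  imports Defs
begin

theorem mainTheorem5:
  fixes U U' :: "(int \<times> int) set"
  assumes "U \<subseteq> U'"
    and "upward_closed U"
    and "upward_closed U'"
  shows "peel U \<subseteq> peel U'"
proof
  fix p assume p: "p \<in> peel U"
  have pU: "p \<in> U" and ne: "\<not> (grid_emb p extreme_point_of (convex hull (grid_emb ` U)))"
    using p by (auto simp: peel_def)
  have sub: "convex hull (grid_emb ` U) \<subseteq> convex hull (grid_emb ` U')"
    using assms(1) by (intro hull_mono) auto
  have pin: "grid_emb p \<in> convex hull (grid_emb ` U)"
    using pU by (simp add: hull_inc)
  have "\<not> (grid_emb p extreme_point_of (convex hull (grid_emb ` U')))"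
  proof
    assume "grid_emb p extreme_point_of (convex hull (grid_emb ` U'))"
    then have "grid_emb p extreme_point_of (convex hull (grid_emb ` U))"
      using sub pin unfolding extreme_point_of_def by blast
    with ne show False by simp
  qed
  then show "p \<in> peel U'" using pU assms(1) by (auto simp: peel_def)
qed

end
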